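(* Let $\mathbf{T}\subset\mathbb{S}^3$ be a $\mathbb{Z}_2$-symmetric spherical tetrahedron with dihedral angles $A$, $B=E$, $C=F$, $D$ and edge lengths $l_A$, $l_B=l_E$, $l_C=l_F$, $l_D$. Put $a_+=\cos\frac{l_A+l_D}{2}$, $a_-=\cos\frac{l_A-l_D}{2}$, $b=\cos l_B$, $c=\cos l_C$, $\mathcal{A}_+=\cos\frac{A+D}{2}$, $\mathcal{A}_-=\cos\frac{D-A}{2}$, $\mathcal{B}=\cos B$, $\mathcal{C}=\cos C$. Then there exists a (symmetric) spherical tetrahedron $\mathbf{T}_s$, with dihedral angles $\alpha,\beta,\gamma$ (each appearing on a pair of opposite edges) and corresponding edge lengths $l_\alpha,l_\beta,l_\gamma$, whose Gram matrix is $$G_s=\begin{pmatrix}1&-\cos\alpha&-\cos\beta&-\cos\gamma\\-\cos\alpha&1&-\cos\gamma&-\cos\beta\\-\cos\beta&-\cos\gamma&1&-\cos\alpha\\-\cos\gamma&-\cos\beta&-\cos\alpha&1\end{pmatrix}=\begin{pmatrix}1&-\frac{\mathcal{A}_+}{\mathcal{A}_-}&-\frac{\mathcal{B}}{\mathcal{A}_-}&-\frac{\mathcal{C}}{\mathcal{A}_-}\\-\frac{\mathcal{A}_+}{\mathcal{A}_-}&1&-\frac{\mathcal{C}}{\mathcal{A}_-}&-\frac{\mathcal{B}}{\mathcal{A}_-}\\-\frac{\mathcal{B}}{\mathcal{A}_-}&-\frac{\mathcal{C}}{\mathcal{A}_-}&1&-\frac{\mathcal{A}_+}{\mathcal{A}_-}\\-\frac{\mathcal{C}}{\mathcal{A}_-}&-\frac{\mathcal{B}}{\mathcal{A}_-}&-\frac{\mathcal{A}_+}{\mathcal{A}_-}&1\end{pmatrix}$$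 and whose edge matrix is $$G^\star_s=\begin{pmatrix}1&\cos l_\alpha&\cos l_\beta&\cos l_\gamma\\\cos l_\alpha&1&\cos l_\gamma&\cos l_\beta\\\cos l_\beta&\cos l_\gamma&1&\cos l_\alpha\\\cos l_\gamma&\cos l_\beta&\cos l_\alpha&1\end{pmatrix}=\begin{pmatrix}1&\frac{a_+}{a_-}&\frac{b}{a_-}&\frac{c}{a_-}\\\frac{a_+}{a_-}&1&\frac{c}{a_-}&\frac{b}{a_-}\\\frac{b}{a_-}&\frac{c}{a_-}&1&\frac{a_+}{a_-}\\\frac{c}{a_-}&\frac{b}{a_-}&\frac{a_+}{a_-}&1\end{pmatrix}.$$
   Context: A spherical tetrahedron $\mathbf{T}\subset\mathbb{S}^3\subset\mathbb{R}^4$ is the intersection of $\mathbb{S}^3$ with the cone over four linearly independent unit vectors $\mathrm{p}_0,\dots,\mathrm{p}_3$. Edge lengths $l_{ij}\in[0,\pi]$: $\cos l_{ij}=\langle\mathrm{p}_i,\mathrm{p}_j\rangle$; dihedral angles $\alpha_{ij}\in[0,\pi]$: $\cos\alpha_{ij}=-\langle\mathrm{v}_i,\mathrm{v}_j\rangle$ with $\mathrm{v}_i$ the outer unit normal of the face opposite $\mathrm{p}_i$. The edge matrix of a tetrahedron is $(\langle\mathrm{p}_i,\mathrm{p}_j\rangle)_{i,j=0}^3$ and its Gram matrix is $(\langle\mathrm{v}_i,\mathrm{v}_j\rangle)_{i,j=0}^3$. Notation for $\mathbf{T}$: $l_A=l_{01}$, $l_B=l_{02}$, $l_C=l_{03}$,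 $l_D=l_{23}$, $l_E=l_{13}$, $l_F=l_{12}$; $A,\dots,F$ are the dihedral angles along the edges of lengths $l_A,\dots,l_F$. $\mathbf{T}$ is $\mathbb{Z}_2$-symmetric if invariant under rotation through $\pi$ about the axis through the midpoints of the edges $\mathrm{p}_0\mathrm{p}_1$ and $\mathrm{p}_2\mathrm{p}_3$ (so $l_B=l_E$, $l_C=l_F$, $B=E$, $C=F$). A tetrahedron is called symmetric if opposite edges have equal lengths (equivalently, equal dihedral angles). *)

theory Defs
  imports "HOL-Analysis.Analysis"
begin

definition spherical_tetrahedron :: "(nat \<Rightarrow> real^4) \<Rightarrow> bool" where
  "spherical_tetrahedron p \<longleftrightarrow>
     (\<forall>i<4. norm (p i) = 1) \<and> inj_on p {0..<4} \<and> independent (p ` {0..<4})"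

definition outer_normal :: "(nat \<Rightarrow> real^4) \<Rightarrow> nat \<Rightarrow> real^4" where
  "outer_normal p i = (THE v. norm v = 1 \<and> (\<forall>j<4. j \<noteq> i \<longrightarrow> v \<bullet> p j = 0) \<and> v \<bullet> p i < 0)"

definition edge_matrix :: "(nat \<Rightarrow> real^4) \<Rightarrow> nat \<Rightarrow> nat \<Rightarrow> real" where
  "edge_matrix p i j = p i \<bullet> p j"

definition gram_matrix :: "(nat \<Rightarrow> real^4) \<Rightarrow> nat \<Rightarrow> nat \<Rightarrow> real" where
  "gram_matrix p i j = outer_normal p i \<bullet> outer_normal p j"

text \<open>Edge length l_ij and dihedral angle alpha_ij (cos alpha_ij = - <v_i,v_j>);
alpha_ij is the dihedral angle along the edge joining the two vertices other than p i, p j.\<close>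

definition edge_len :: "(nat \<Rightarrow> real^4) \<Rightarrow> nat \<Rightarrow> nat \<Rightarrow> real" where
  "edge_len p i j = arccos (p i \<bullet> p j)"

definition dih :: "(nat \<Rightarrow> real^4) \<Rightarrow> nat \<Rightarrow> nat \<Rightarrow> real" where
  "dih p i j = arccos (- (outer_normal p i \<bullet> outer_normal p j))"

text \<open>Z_2-symmetry: the tetrahedron is invariant under the rotation through pi about
the axis through the midpoints of p0p1 and p2p3, i.e. the orthogonal map of R^4
swapping p0 <-> p1 and p2 <-> p3.\<close>

definition Z2_symmetric :: "(nat \<Rightarrow> real^4) \<Rightarrow> bool" where
  "Z2_symmetric p \<longleftrightarrow> (\<exists>f. orthogonal_transformation f \<and>
      f (p 0) = p 1 \<and> f (p 1) = p 0 \<and> f (p 2) = p 3 \<and> f (p 3) = p 2)"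

definition sym_pattern :: "real \<Rightarrow> real \<Rightarrow> real \<Rightarrow> real \<Rightarrow> nat \<Rightarrow> nat \<Rightarrow> real" where
  "sym_pattern d x y z i j =
     (if i = j then d
      else if {i, j} = {0, 1} \<or> {i, j} = {2, 3} then x
      else if {i, j} = {0, 2} \<or> {i, j} = {1, 3} then y
      else z)"

end

theory Submission
  imports Defs
begin
lemma span_all:
  assumes "spherical_tetrahedron p"
  shows "span (p ` {0..<4}) = UNIV"
proof -
  have ind: "independent (p ` {0..<4})" and inj: "inj_on p {0..<4}"
    using assms unfolding spherical_tetrahedron_def by auto
  have c: "card (p ` {0..<4}) = 4" using inj by (simp add: card_image)
  have "UNIV \<subseteq> span (p ` {0..<4})"
    using card_ge_dim_independent[of "p ` {0..<4}" UNIV] ind c by simp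
  then show ?thesis by auto
qed

lemma det_principle:
  assumes "spherical_tetrahedron p" "\<And>j. j < 4 \<Longrightarrow> x \<bullet> p j = y \<bullet> p j"
  shows "x = y"
proof -
  have "orthogonal (x - y) z" if "z \<in> span (p ` {0..<4})" for z
    using that
  proof (rule orthogonal_to_span)
    fix w assume "w \<in> p ` {0..<4}"
    then obtain j where "j < 4" "w = p j" by auto
    then show "orthogonal (x - y) w" using assms(2)[of j] by (simp add: orthogonal_def inner_diff_left)
  qed
  then have "orthogonal (x - y) (x - y)" using span_all[OF assms(1)] by auto
  then show ?thesis by (simp add: orthogonal_def)
qed

lemma normal_unique:
  assumes T: "spherical_tetrahedron p" and i: "i < 4" and n: "norm v = 1"
    and o: "\<And>j. j < 4 \<Longrightarrow> j \<noteq> i \<Longrightarrow> v \<bullet> p j = 0" and neg: "v \<bullet> p i < 0"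
  shows "outer_normal p i = v"
  unfolding outer_normal_def
proof (rule the_equality)
  show "norm v = 1 \<and> (\<forall>j<4. j \<noteq> i \<longrightarrow> v \<bullet> p j = 0) \<and> v \<bullet> p i < 0" using n o neg by auto
next
  fix w assume w: "norm w = 1 \<and> (\<forall>j<4. j \<noteq> i \<longrightarrow> w \<bullet> p j = 0) \<and> w \<bullet> p i < 0"
  define l where "l = (w \<bullet> p i) / (v \<bullet> p i)"
  have l: "l > 0" using w neg unfolding l_def by (simp add: divide_neg_neg)
  have "w = l *\<^sub>R v"
  proof (rule det_principle[OF T])
    fix j :: nat assume "j < 4"
    then show "w \<bullet> p j = (l *\<^sub>R v) \<bullet> p j"
      using w o neg unfolding l_def by (cases "j = i") auto
  qed
  then have "norm w = l * norm v" using l by simp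
  then have "l = 1" using w n by simp
  with \<open>w = l *\<^sub>R v\<close> show "w = v" by simp
qed

lemma normal_exists:
  assumes T: "spherical_tetrahedron p" and i: "i < 4"
  shows "\<exists>v. norm v = 1 \<and> (\<forall>j<4. j \<noteq> i \<longrightarrow> v \<bullet> p j = 0) \<and> v \<bullet> p i < 0"
proof -
  let ?S = "p ` ({0..<4} - {i})"
  have "card ({0..<4::nat} - {i}) = 3" using i by simp
  then have "card ?S \<le> 3" by (metis card_image_le finite_Diff finite_atLeastLessThan)
  then have "dim ?S < DIM(real^4)"
    using dim_le_card[of ?S ?S] by (simp add: span_superset)
  then obtain x where x0: "x \<noteq> 0" and xo: "\<And>y. y \<in> span ?S \<Longrightarrow> orthogonal x y"
    using orthogonal_to_subspace_exists by blast
  have xj: "x \<bullet> p j = 0" if "j < 4" "j \<noteq> i" for j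
  proof -
    have "p j \<in> span ?S" using that by (intro span_base) auto
    then show ?thesis using xo[of "p j"] by (simp add: orthogonal_def)
  qed
  have xi: "x \<bullet> p i \<noteq> 0"
  proof
    assume "x \<bullet> p i = 0"
    then have "x = 0" using xj by (intro det_principle[OF T]) (metis inner_zero_left)
    with x0 show False by simp
  qed
  define v where "v = (- sgn (x \<bullet> p i) / norm x) *\<^sub>R x"
  have "norm v = 1" using x0 xi unfolding v_def by (simp add: abs_sgn)
  moreover have "\<forall>j<4. j \<noteq> i \<longrightarrow> v \<bullet> p j = 0" using xj unfolding v_def by simp
  moreover have "v \<bullet> p i < 0" using x0 xi unfolding v_def
    by (simp add: sgn_if divide_neg_pos)
  ultimately show ?thesis by blast
qed

lemma normal_props:
  assumes T: "spherical_tetrahedron p" and i: "i < 4"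
  shows "norm (outer_normal p i) = 1" "\<And>j. j < 4 \<Longrightarrow> j \<noteq> i \<Longrightarrow> outer_normal p i \<bullet> p j = 0"
    "outer_normal p i \<bullet> p i < 0"
proof -
  obtain v where v: "norm v = 1" "\<forall>j<4. j \<noteq> i \<longrightarrow> v \<bullet> p j = 0" "v \<bullet> p i < 0"
    using normal_exists[OF T i] by blast
  have e: "outer_normal p i = v" using normal_unique[OF T i] v by blast
  show "norm (outer_normal p i) = 1" "\<And>j. j < 4 \<Longrightarrow> j \<noteq> i \<Longrightarrow> outer_normal p i \<bullet> p j = 0"
    "outer_normal p i \<bullet> p i < 0" using v unfolding e by auto
qed

lemma tet_by_duals:
  fixes q w :: "nat \<Rightarrow> real^4"
  assumes n: "\<And>i. i < 4 \<Longrightarrow> norm (q i) = 1"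
    and o: "\<And>i j. i < 4 \<Longrightarrow> j < 4 \<Longrightarrow> j \<noteq> i \<Longrightarrow> w i \<bullet> q j = 0"
    and d: "\<And>i. i < 4 \<Longrightarrow> w i \<bullet> q i \<noteq> 0"
  shows "spherical_tetrahedron q"
proof -
  have inj: "inj_on q {0..<4}"
  proof (rule inj_onI)
    fix i j assume "i \<in> {0..<(4::nat)}" "j \<in> {0..<(4::nat)}" "q i = q j"
    then show "i = j" using o[of i j] d[of i] by (metis atLeastLessThan_iff)
  qed
  have ind: "independent (q ` {0..<4})"
    unfolding independent_explicit
  proof (intro conjI allI impI ballI)
    show "finite (q ` {0..<4})" by simp
    fix cc :: "real^4 \<Rightarrow> real" and u
    assume s: "(\<Sum>v\<in>q ` {0..<4}. cc v *\<^sub>R v) = 0" and u: "u \<in> q ` {0..<4}"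
    then obtain i where i: "i < 4" "u = q i" by auto
    have "0 = w i \<bullet> (\<Sum>v\<in>q ` {0..<4}. cc v *\<^sub>R v)" using s by simp
    also have "\<dots> = (\<Sum>v\<in>q ` {0..<4}. cc v * (w i \<bullet> v))"
      by (simp add: inner_sum_right)
    also have "\<dots> = cc (q i) * (w i \<bullet> q i) + (\<Sum>v\<in>q ` {0..<4} - {q i}. cc v * (w i \<bullet> v))"
      using i by (subst sum.remove[of _ "q i"]) auto
    also have "(\<Sum>v\<in>q ` {0..<4} - {q i}. cc v * (w i \<bullet> v)) = 0"
    proof (rule sum.neutral, rule ballI)
      fix v assume "v \<in> q ` {0..<4} - {q i}"
      then obtain j where "j < 4" "v = q j" by (auto simp: image_iff)
      moreover have "j \<noteq> i" using \<open>v \<in> q ` {0..<4} - {q i}\<close> \<open>v = q j\<close> by auto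
      ultimately
      show "cc v * (w i \<bullet> v) = 0" using o[of i j] i by simp
    qed
    finally show "cc u = 0" using d[OF i(1)] i by simp
  qed
  show ?thesis unfolding spherical_tetrahedron_def using n inj ind by auto
qed

lemma strict_cos:
  fixes a b u :: "real^4"
  assumes "norm a = 1" "norm b = 1" "u \<bullet> a = 0" "u \<bullet> b \<noteq> 0"
  shows "-1 < a \<bullet> b \<and> a \<bullet> b < 1"
proof -
  have le: "\<bar>a \<bullet> b\<bar> \<le> 1" using Cauchy_Schwarz_ineq2[of a b] assms by simp
  have aa: "a \<bullet> a = 1" "b \<bullet> b = 1" using assms by (simp_all add: power2_norm_eq_inner[symmetric])
  have "a \<bullet> b \<noteq> 1"
  proof
    assume "a \<bullet> b = 1"
    then have "(a - b) \<bullet> (a - b) = 0" using aa by (simp add: inner_diff inner_commute)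
    then have "a = b" by simp
    then show False using assms by simp
  qed
  moreover have "a \<bullet> b \<noteq> -1"
  proof
    assume "a \<bullet> b = -1"
    then have "(a + b) \<bullet> (a + b) = 0" using aa by (simp add: inner_add inner_commute)
    then have "a + b = 0" by simp
    then have "b = - a" by (simp add: add_eq_0_iff2 add.commute)
    then show False using assms by simp
  qed
  ultimately show ?thesis using le by auto
qed

lemma half_angle:
  fixes z :: real
  assumes "-1 < z" "z < 1"
  shows "cos (arccos z / 2) > 0" "sin (arccos z / 2) > 0"
    "(cos (arccos z / 2))^2 = (1 + z) / 2" "(sin (arccos z / 2))^2 = (1 - z) / 2"
proof -
  have b: "0 < arccos z" "arccos z < pi" using arccos_lt_bounded assms by auto
  show "cos (arccos z / 2) > 0" using b by (intro cos_gt_zero_pi) auto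
  show "sin (arccos z / 2) > 0" using b by (intro sin_gt_zero) auto
  have c: "cos (2 * (arccos z / 2)) = z" using assms by simp
  have s: "(sin (arccos z / 2))^2 + (cos (arccos z / 2))^2 = 1" by simp
  show "(cos (arccos z / 2))^2 = (1 + z) / 2"
    using c s unfolding cos_double by (auto simp: field_simps)
  show "(sin (arccos z / 2))^2 = (1 - z) / 2"
    using c s unfolding cos_double by (auto simp: field_simps)
qed

theorem lemma4:
  fixes p :: "nat \<Rightarrow> real^4"
  assumes "spherical_tetrahedron p" and "Z2_symmetric p"
  defines "lA \<equiv> edge_len p 0 1" and "lB \<equiv> edge_len p 0 2"
      and "lC \<equiv> edge_len p 0 3" and "lD \<equiv> edge_len p 2 3"
      and "A \<equiv> dih p 2 3" and "B \<equiv> dih p 1 3"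
      and "C \<equiv> dih p 1 2" and "D \<equiv> dih p 0 1"
  defines "ap \<equiv> cos ((lA + lD) / 2)" and "am \<equiv> cos ((lA - lD) / 2)"
      and "b \<equiv> cos lB" and "c \<equiv> cos lC"
      and "Ap \<equiv> cos ((A + D) / 2)" and "Am \<equiv> cos ((D - A) / 2)"
      and "Bc \<equiv> cos B" and "Cc \<equiv> cos C"
  shows "\<exists>q :: nat \<Rightarrow> real^4. spherical_tetrahedron q \<and>
    (\<exists>\<alpha> \<beta> \<gamma> l\<alpha> l\<beta> l\<gamma>.
       dih q 0 1 = \<alpha> \<and> dih q 2 3 = \<alpha> \<and> dih q 0 2 = \<beta> \<and> dih q 1 3 = \<beta> \<and>
       dih q 0 3 = \<gamma> \<and> dih q 1 2 = \<gamma> \<and>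
       edge_len q 0 1 = l\<alpha> \<and> edge_len q 2 3 = l\<alpha> \<and> edge_len q 0 2 = l\<beta> \<and>
       edge_len q 1 3 = l\<beta> \<and> edge_len q 0 3 = l\<gamma> \<and> edge_len q 1 2 = l\<gamma> \<and>
       (\<forall>i<4. \<forall>j<4.
          gram_matrix q i j = sym_pattern 1 (- cos \<alpha>) (- cos \<beta>) (- cos \<gamma>) i j \<and>
          gram_matrix q i j = sym_pattern 1 (- (Ap / Am)) (- (Bc / Am)) (- (Cc / Am)) i j \<and>
          edge_matrix q i j = sym_pattern 1 (cos l\<alpha>) (cos l\<beta>) (cos l\<gamma>) i j \<and>
          edge_matrix q i j = sym_pattern 1 (ap / am) (b / am) (c / am) i j))"
proof -
  have T: "spherical_tetrahedron p" using assms(1) .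
  obtain f where f: "orthogonal_transformation f" "f (p 0) = p 1" "f (p 1) = p 0"
      "f (p 2) = p 3" "f (p 3) = p 2"
    using assms(2) unfolding Z2_symmetric_def by blast
  have fi: "\<And>a b. f a \<bullet> f b = a \<bullet> b" using f(1) unfolding orthogonal_transformation_def by blast
  define v where "v = outer_normal p"
  have vn: "\<And>i. i < 4 \<Longrightarrow> norm (v i) = 1" using normal_props(1)[OF T] unfolding v_def .
  have vo: "\<And>i j. i < 4 \<Longrightarrow> j < 4 \<Longrightarrow> j \<noteq> i \<Longrightarrow> v i \<bullet> p j = 0"
    using normal_props(2)[OF T] unfolding v_def by blast
  have vneg: "\<And>i. i < 4 \<Longrightarrow> v i \<bullet> p i < 0" using normal_props(3)[OF T] unfolding v_def .
  have pnorm: "\<And>i. i < 4 \<Longrightarrow> norm (p i) = 1" using T unfolding spherical_tetrahedron_def by blast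
  have pn: "\<And>i. i < 4 \<Longrightarrow> p i \<bullet> p i = 1" using pnorm by (simp add: power2_norm_eq_inner[symmetric])
  have vn1: "\<And>i. i < 4 \<Longrightarrow> v i \<bullet> v i = 1" using vn by (simp add: power2_norm_eq_inner[symmetric])
  have sym_p: "p 1 \<bullet> p 3 = p 0 \<bullet> p 2" "p 1 \<bullet> p 2 = p 0 \<bullet> p 3"
    using fi[of "p 0" "p 2"] fi[of "p 0" "p 3"] f by auto
  have fnorm: "norm (f a) = norm a" for a by (simp add: norm_eq_sqrt_inner fi)
  have fv1: "f (v 0) = v 1"
  proof -
    have "outer_normal p 1 = f (v 0)"
    proof (rule normal_unique[OF T])
      show "norm (f (v 0)) = 1" using fnorm vn[of 0] by simp
      show "f (v 0) \<bullet> p 1 < 0" using vneg[of 0] fi[of "v 0" "p 0"] f by simp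
      fix j :: nat assume "j < 4" "j \<noteq> 1"
      then have "j = 0 \<or> j = 2 \<or> j = 3" by auto
      then show "f (v 0) \<bullet> p j = 0"
        using vo[of 0 1] vo[of 0 3] vo[of 0 2] fi[of "v 0" "p 1"] fi[of "v 0" "p 3"] fi[of "v 0" "p 2"] f
        by auto
    qed simp
    then show ?thesis unfolding v_def by simp
  qed
  have fv3: "f (v 2) = v 3"
  proof -
    have "outer_normal p 3 = f (v 2)"
    proof (rule normal_unique[OF T])
      show "norm (f (v 2)) = 1" using fnorm vn[of 2] by simp
      show "f (v 2) \<bullet> p 3 < 0" using vneg[of 2] fi[of "v 2" "p 2"] f by simp
      fix j :: nat assume "j < 4" "j \<noteq> 3"
      then have "j = 0 \<or> j = 1 \<or> j = 2" by auto
      then show "f (v 2) \<bullet> p j = 0"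
        using vo[of 2 1] vo[of 2 3] vo[of 2 0] fi[of "v 2" "p 1"] fi[of "v 2" "p 3"] fi[of "v 2" "p 0"] f
        by auto
    qed simp
    then show ?thesis unfolding v_def by simp
  qed
  have fv0: "f (v 1) = v 0"
  proof -
    have "f (f (v 0)) = v 0"
    proof (rule det_principle[OF T])
      fix j :: nat assume "j < 4"
      then have "j = 0 \<or> j = 1 \<or> j = 2 \<or> j = 3" by auto
      then show "f (f (v 0)) \<bullet> p j = v 0 \<bullet> p j"
        using fi[of "f (v 0)" "f (p j)"] fi[of "v 0" "p j"] f
        by (metis)
    qed
    then show ?thesis using fv1 by simp
  qed
  have sym_v: "v 1 \<bullet> v 3 = v 0 \<bullet> v 2" "v 1 \<bullet> v 2 = v 0 \<bullet> v 3"
    using fi[of "v 0" "v 2"] fi[of "v 1" "v 2"] fv1 fv3 fv0 by (auto simp: inner_commute)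
  have sym_k: "v 1 \<bullet> p 1 = v 0 \<bullet> p 0" "v 3 \<bullet> p 3 = v 2 \<bullet> p 2"
    using fi[of "v 0" "p 0"] fi[of "v 2" "p 2"] fv1 fv3 f by auto
  define x where "x = p 0 \<bullet> p 1"
  define y where "y = p 2 \<bullet> p 3"
  define bq where "bq = p 0 \<bullet> p 2"
  define cq where "cq = p 0 \<bullet> p 3"
  define s where "s = v 0 \<bullet> v 1"
  define t where "t = v 2 \<bullet> v 3"
  define bb where "bb = v 0 \<bullet> v 2"
  define cc where "cc = v 0 \<bullet> v 3"
  define k0 where "k0 = - (v 0 \<bullet> p 0)"
  define k2 where "k2 = - (v 2 \<bullet> p 2)"
  have k0: "k0 > 0" using vneg[of 0] unfolding k0_def by simp
  have k2: "k2 > 0" using vneg[of 2] unfolding k2_def by simp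
  have vo0: "\<And>i j. i < 4 \<Longrightarrow> j < 4 \<Longrightarrow> j \<noteq> i \<Longrightarrow> v i \<bullet> p j = 0" by (rule vo)
  have ptab: "p 0 \<bullet> p 0 = 1"
    "p 0 \<bullet> p 1 = x"
    "p 0 \<bullet> p 2 = bq"
    "p 0 \<bullet> p 3 = cq"
    "p 1 \<bullet> p 0 = x"
    "p 1 \<bullet> p 1 = 1"
    "p 1 \<bullet> p 2 = cq"
    "p 1 \<bullet> p 3 = bq"
    "p 2 \<bullet> p 0 = bq"
    "p 2 \<bullet> p 1 = cq"
    "p 2 \<bullet> p 2 = 1"
    "p 2 \<bullet> p 3 = y"
    "p 3 \<bullet> p 0 = cq"
    "p 3 \<bullet> p 1 = bq"
    "p 3 \<bullet> p 2 = y"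
    "p 3 \<bullet> p 3 = 1"
    using pn sym_p unfolding x_def y_def bq_def cq_def by (simp_all add: inner_commute)
  have vtab: "v 0 \<bullet> v 0 = 1"
    "v 0 \<bullet> v 1 = s"
    "v 0 \<bullet> v 2 = bb"
    "v 0 \<bullet> v 3 = cc"
    "v 1 \<bullet> v 0 = s"
    "v 1 \<bullet> v 1 = 1"
    "v 1 \<bullet> v 2 = cc"
    "v 1 \<bullet> v 3 = bb"
    "v 2 \<bullet> v 0 = bb"
    "v 2 \<bullet> v 1 = cc"
    "v 2 \<bullet> v 2 = 1"
    "v 2 \<bullet> v 3 = t"
    "v 3 \<bullet> v 0 = cc"
    "v 3 \<bullet> v 1 = bb"
    "v 3 \<bullet> v 2 = t"
    "v 3 \<bullet> v 3 = 1"
    using vn1 sym_v unfolding s_def t_def bb_def cc_def by (simp_all add: inner_commute)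
  have vp_0_0: "v 0 \<bullet> p 0 = - k0" "p 0 \<bullet> v 0 = - k0" using sym_k unfolding k0_def k2_def by (simp_all add: inner_commute)
  have vp_0_1: "v 0 \<bullet> p 1 = 0" "p 1 \<bullet> v 0 = 0" using vo[of 0 1] by (simp_all add: inner_commute)
  have vp_0_2: "v 0 \<bullet> p 2 = 0" "p 2 \<bullet> v 0 = 0" using vo[of 0 2] by (simp_all add: inner_commute)
  have vp_0_3: "v 0 \<bullet> p 3 = 0" "p 3 \<bullet> v 0 = 0" using vo[of 0 3] by (simp_all add: inner_commute)
  have vp_1_0: "v 1 \<bullet> p 0 = 0" "p 0 \<bullet> v 1 = 0" using vo[of 1 0] by (simp_all add: inner_commute)
  have vp_1_1: "v 1 \<bullet> p 1 = - k0" "p 1 \<bullet> v 1 = - k0" using sym_k unfolding k0_def k2_def by (simp_all add: inner_commute)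
  have vp_1_2: "v 1 \<bullet> p 2 = 0" "p 2 \<bullet> v 1 = 0" using vo[of 1 2] by (simp_all add: inner_commute)
  have vp_1_3: "v 1 \<bullet> p 3 = 0" "p 3 \<bullet> v 1 = 0" using vo[of 1 3] by (simp_all add: inner_commute)
  have vp_2_0: "v 2 \<bullet> p 0 = 0" "p 0 \<bullet> v 2 = 0" using vo[of 2 0] by (simp_all add: inner_commute)
  have vp_2_1: "v 2 \<bullet> p 1 = 0" "p 1 \<bullet> v 2 = 0" using vo[of 2 1] by (simp_all add: inner_commute)
  have vp_2_2: "v 2 \<bullet> p 2 = - k2" "p 2 \<bullet> v 2 = - k2" using sym_k unfolding k0_def k2_def by (simp_all add: inner_commute)
  have vp_2_3: "v 2 \<bullet> p 3 = 0" "p 3 \<bullet> v 2 = 0" using vo[of 2 3] by (simp_all add: inner_commute)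
  have vp_3_0: "v 3 \<bullet> p 0 = 0" "p 0 \<bullet> v 3 = 0" using vo[of 3 0] by (simp_all add: inner_commute)
  have vp_3_1: "v 3 \<bullet> p 1 = 0" "p 1 \<bullet> v 3 = 0" using vo[of 3 1] by (simp_all add: inner_commute)
  have vp_3_2: "v 3 \<bullet> p 2 = 0" "p 2 \<bullet> v 3 = 0" using vo[of 3 2] by (simp_all add: inner_commute)
  have vp_3_3: "v 3 \<bullet> p 3 = - k2" "p 3 \<bullet> v 3 = - k2" using sym_k unfolding k0_def k2_def by (simp_all add: inner_commute)
  note vptab = vp_0_0 vp_0_1 vp_0_2 vp_0_3 vp_1_0 vp_1_1 vp_1_2 vp_1_3 vp_2_0 vp_2_1 vp_2_2 vp_2_3 vp_3_0 vp_3_1 vp_3_2 vp_3_3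
  note tabs = ptab vtab vptab ptab[simplified] vtab[simplified] vptab[simplified]
  note ips = inner_add_left inner_add_right inner_diff_left inner_diff_right inner_scaleR_left inner_scaleR_right
  have ndx: "-1 < x \<and> x < 1" unfolding x_def
    using strict_cos[of "p 0" "p 1" "v 1"] pnorm[of 0] pnorm[of 1] vp_1_0 vp_1_1 k0 by simp
  have ndy: "-1 < y \<and> y < 1" unfolding y_def
    using strict_cos[of "p 2" "p 3" "v 3"] pnorm[of 2] pnorm[of 3] vp_3_2 vp_3_3 k2 by simp
  have nds: "-1 < s \<and> s < 1" unfolding s_def
    using strict_cos[of "v 0" "v 1" "p 1"] vn[of 0] vn[of 1] vp_0_1 vp_1_1 k0 by simp
  have ndt: "-1 < t \<and> t < 1" unfolding t_def
    using strict_cos[of "v 2" "v 3" "p 3"] vn[of 2] vn[of 3] vp_2_3 vp_3_3 k2 by simp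
  have bbb: "\<bar>bb\<bar> \<le> 1" unfolding bb_def using Cauchy_Schwarz_ineq2[of "v 0" "v 2"] vn[of 0] vn[of 2] by simp
  have ccb: "\<bar>cc\<bar> \<le> 1" unfolding cc_def using Cauchy_Schwarz_ineq2[of "v 0" "v 3"] vn[of 0] vn[of 3] by simp
  have bqb: "\<bar>bq\<bar> \<le> 1" unfolding bq_def using Cauchy_Schwarz_ineq2[of "p 0" "p 2"] pnorm[of 0] pnorm[of 2] by simp
  have cqb: "\<bar>cq\<bar> \<le> 1" unfolding cq_def using Cauchy_Schwarz_ineq2[of "p 0" "p 3"] pnorm[of 0] pnorm[of 3] by simp
  have lA: "lA = arccos x" unfolding lA_def edge_len_def x_def ..
  have lD: "lD = arccos y" unfolding lD_def edge_len_def y_def ..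
  have bval: "b = bq" using bqb unfolding b_def lB_def edge_len_def bq_def[symmetric] by (simp add: abs_le_iff)
  have cval: "c = cq" using cqb unfolding c_def lC_def edge_len_def cq_def[symmetric] by (simp add: abs_le_iff)
  have Dv: "D = arccos (- s)" unfolding D_def dih_def s_def v_def ..
  have Av: "A = arccos (- t)" unfolding A_def dih_def t_def v_def ..
  have Bcval: "Bc = - bb"
  proof -
    have "Bc = cos (arccos (- (v 1 \<bullet> v 3)))" unfolding Bc_def B_def dih_def v_def ..
    also have "\<dots> = cos (arccos (- bb))" by (simp only: vtab)
    finally show ?thesis using bbb by (simp add: abs_le_iff)
  qed
  have Ccval: "Cc = - cc"
  proof -
    have "Cc = cos (arccos (- (v 1 \<bullet> v 2)))" unfolding Cc_def C_def dih_def v_def ..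
    also have "\<dots> = cos (arccos (- cc))" by (simp only: vtab)
    finally show ?thesis using ccb by (simp add: abs_le_iff)
  qed
  define cA where "cA = cos (lA / 2)"
  define sA where "sA = sin (lA / 2)"
  define cD where "cD = cos (lD / 2)"
  define sD where "sD = sin (lD / 2)"
  define cAd where "cAd = cos (A / 2)"
  define sAd where "sAd = sin (A / 2)"
  define cDd where "cDd = cos (D / 2)"
  define sDd where "sDd = sin (D / 2)"
  have hA: "cA > 0" "sA > 0" "cA^2 = (1 + x) / 2" "sA^2 = (1 - x) / 2"
    unfolding cA_def sA_def lA using half_angle[of x] ndx by auto
  have hD: "cD > 0" "sD > 0" "cD^2 = (1 + y) / 2" "sD^2 = (1 - y) / 2"
    unfolding cD_def sD_def lD using half_angle[of y] ndy by auto
  have hAd: "cAd > 0" "sAd > 0" "cAd^2 = (1 - t) / 2" "sAd^2 = (1 + t) / 2"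
    unfolding cAd_def sAd_def Av using half_angle[of "-t"] ndt by auto
  have hDd: "cDd > 0" "sDd > 0" "cDd^2 = (1 - s) / 2" "sDd^2 = (1 + s) / 2"
    unfolding cDd_def sDd_def Dv using half_angle[of "-s"] nds by auto
  have amv: "am = cA * cD + sA * sD"
  proof -
    have h: "(lA - lD) / 2 = lA / 2 - lD / 2" by simp
    show ?thesis unfolding am_def cA_def cD_def sA_def sD_def h by (rule cos_diff)
  qed
  have apv: "ap = cA * cD - sA * sD"
  proof -
    have h: "(lA + lD) / 2 = lA / 2 + lD / 2" by simp
    show ?thesis unfolding ap_def cA_def cD_def sA_def sD_def h by (rule cos_add)
  qed
  have Amv: "Am = cDd * cAd + sDd * sAd"
  proof -
    have h: "(D - A) / 2 = D / 2 - A / 2" by simp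
    show ?thesis unfolding Am_def cAd_def cDd_def sAd_def sDd_def h by (rule cos_diff)
  qed
  have Apv: "Ap = cDd * cAd - sDd * sAd"
  proof -
    have h: "(A + D) / 2 = A / 2 + D / 2" by simp
    show ?thesis unfolding Ap_def cAd_def cDd_def sAd_def sDd_def h cos_add by (simp add: mult.commute)
  qed
  define K where "K = (1 + x) * (1 + y) - (bq + cq)^2"
  define K' where "K' = (1 - x) * (1 - y) - (bq - cq)^2"
  have Id1: "((1 + y) * k0) *\<^sub>R (p 0 + p 1) = ((bq + cq) * k0) *\<^sub>R (p 2 + p 3) - K *\<^sub>R (v 0 + v 1)"
  proof (rule det_principle[OF T])
    fix j :: nat assume "j < 4"
    then have "j = 0 \<or> j = 1 \<or> j = 2 \<or> j = 3" by auto
    then show "(((1 + y) * k0) *\<^sub>R (p 0 + p 1)) \<bullet> p j = (((bq + cq) * k0) *\<^sub>R (p 2 + p 3) - K *\<^sub>R (v 0 + v 1)) \<bullet> p j"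
      by (auto simp: ips tabs K_def algebra_simps power2_eq_square)
  qed
  have Id2: "((1 + x) * k2) *\<^sub>R (p 2 + p 3) = ((bq + cq) * k2) *\<^sub>R (p 0 + p 1) - K *\<^sub>R (v 2 + v 3)"
  proof (rule det_principle[OF T])
    fix j :: nat assume "j < 4"
    then have "j = 0 \<or> j = 1 \<or> j = 2 \<or> j = 3" by auto
    then show "(((1 + x) * k2) *\<^sub>R (p 2 + p 3)) \<bullet> p j = (((bq + cq) * k2) *\<^sub>R (p 0 + p 1) - K *\<^sub>R (v 2 + v 3)) \<bullet> p j"
      by (auto simp: ips tabs K_def algebra_simps power2_eq_square)
  qed
  have Id3: "((1 - y) * k0) *\<^sub>R (p 0 - p 1) = ((bq - cq) * k0) *\<^sub>R (p 2 - p 3) - K' *\<^sub>R (v 0 - v 1)"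
  proof (rule det_principle[OF T])
    fix j :: nat assume "j < 4"
    then have "j = 0 \<or> j = 1 \<or> j = 2 \<or> j = 3" by auto
    then show "(((1 - y) * k0) *\<^sub>R (p 0 - p 1)) \<bullet> p j = (((bq - cq) * k0) *\<^sub>R (p 2 - p 3) - K' *\<^sub>R (v 0 - v 1)) \<bullet> p j"
      by (auto simp: ips tabs K'_def algebra_simps power2_eq_square)
  qed
  have Id4: "((1 - x) * k2) *\<^sub>R (p 2 - p 3) = ((bq - cq) * k2) *\<^sub>R (p 0 - p 1) - K' *\<^sub>R (v 2 - v 3)"
  proof (rule det_principle[OF T])
    fix j :: nat assume "j < 4"
    then have "j = 0 \<or> j = 1 \<or> j = 2 \<or> j = 3" by auto
    then show "(((1 - x) * k2) *\<^sub>R (p 2 - p 3)) \<bullet> p j = (((bq - cq) * k2) *\<^sub>R (p 0 - p 1) - K' *\<^sub>R (v 2 - v 3)) \<bullet> p j"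
      by (auto simp: ips tabs K'_def algebra_simps power2_eq_square)
  qed
  have e1: "(1 + y) * k0^2 = K * (1 + s)"
  proof -
    have "(((1 + y) * k0) *\<^sub>R (p 0 + p 1)) \<bullet> (v 0 + v 1) = (((bq + cq) * k0) *\<^sub>R (p 2 + p 3) - K *\<^sub>R (v 0 + v 1)) \<bullet> (v 0 + v 1)"
      using Id1 by simp
    then show ?thesis by (simp add: ips tabs power2_eq_square algebra_simps)
  qed
  have e2: "(1 + x) * k2^2 = K * (1 + t)"
  proof -
    have "(((1 + x) * k2) *\<^sub>R (p 2 + p 3)) \<bullet> (v 2 + v 3) = (((bq + cq) * k2) *\<^sub>R (p 0 + p 1) - K *\<^sub>R (v 2 + v 3)) \<bullet> (v 2 + v 3)"
      using Id2 by simp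
    then show ?thesis by (simp add: ips tabs power2_eq_square algebra_simps)
  qed
  have e3: "(1 - y) * k0^2 = K' * (1 - s)"
  proof -
    have "(((1 - y) * k0) *\<^sub>R (p 0 - p 1)) \<bullet> (v 0 - v 1) = (((bq - cq) * k0) *\<^sub>R (p 2 - p 3) - K' *\<^sub>R (v 0 - v 1)) \<bullet> (v 0 - v 1)"
      using Id3 by simp
    then show ?thesis by (simp add: ips tabs power2_eq_square algebra_simps)
  qed
  have e4: "(1 - x) * k2^2 = K' * (1 - t)"
  proof -
    have "(((1 - x) * k2) *\<^sub>R (p 2 - p 3)) \<bullet> (v 2 - v 3) = (((bq - cq) * k2) *\<^sub>R (p 0 - p 1) - K' *\<^sub>R (v 2 - v 3)) \<bullet> (v 2 - v 3)"
      using Id4 by simp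
    then show ?thesis by (simp add: ips tabs power2_eq_square algebra_simps)
  qed
  have Kn: "K \<noteq> 0"
  proof
    assume "K = 0" then have "(1 + y) * k0^2 = 0" using e1 by simp
    then show False using ndy k0 by simp
  qed
  have K'n: "K' \<noteq> 0"
  proof
    assume "K' = 0" then have "(1 - y) * k0^2 = 0" using e3 by simp
    then show False using ndy k0 by simp
  qed
  have Ekk: "(K * K') * ((1 + t) * (1 - s) * (1 - x) * (1 + y)) = (K * K') * ((1 - t) * (1 + s) * (1 + x) * (1 - y))"
  proof -
    have "(K * K') * ((1 + t) * (1 - s) * (1 - x) * (1 + y)) = (K * (1 + t)) * (K' * (1 - s)) * (1 - x) * (1 + y)" by algebra
    also have "\<dots> = ((1 + x) * k2^2) * ((1 - y) * k0^2) * (1 - x) * (1 + y)" using e2 e3 by simp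
    also have "\<dots> = ((1 - x) * k2^2) * ((1 + y) * k0^2) * (1 + x) * (1 - y)" by algebra
    also have "\<dots> = (K' * (1 - t)) * (K * (1 + s)) * (1 + x) * (1 - y)" using e1 e4 by simp
    also have "\<dots> = (K * K') * ((1 - t) * (1 + s) * (1 + x) * (1 - y))" by algebra
    finally show ?thesis .
  qed
  have E0: "(1 + t) * (1 - s) * (1 - x) * (1 + y) = (1 - t) * (1 + s) * (1 + x) * (1 - y)"
    using Ekk Kn K'n by simp
  have E: "sAd * cDd * sA * cD = cAd * sDd * cA * sD"
  proof (rule power2_eq_imp_eq)
    have "(sAd * cDd * sA * cD)^2 = sAd^2 * cDd^2 * sA^2 * cD^2" by (simp add: power_mult_distrib)
    also have "\<dots> = ((1 + t) * (1 - s) * (1 - x) * (1 + y)) / 16" unfolding hA(4) hD(3) hAd(4) hDd(3) by simp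
    also have "\<dots> = ((1 - t) * (1 + s) * (1 + x) * (1 - y)) / 16" using E0 by simp
    also have "\<dots> = cAd^2 * sDd^2 * cA^2 * sD^2" unfolding hA(3) hD(4) hAd(3) hDd(4) by simp
    also have "\<dots> = (cAd * sDd * cA * sD)^2" by (simp add: power_mult_distrib)
    finally show "(sAd * cDd * sA * cD)^2 = (cAd * sDd * cA * sD)^2" .
    show "0 \<le> sAd * cDd * sA * cD" using hA hD hAd hDd by simp
    show "0 \<le> cAd * sDd * cA * sD" using hA hD hAd hDd by simp
  qed
  have amp: "am > 0" using hA hD unfolding amv by (simp add: add_pos_pos)
  have Amp: "Am > 0" using hAd hDd unfolding Amv by (simp add: add_pos_pos)
  define mu where "mu = sqrt (cA * cD / am)"
  define nu where "nu = sqrt (sA * sD / am)"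
  define rho where "rho = sqrt (sDd * sAd / Am)"
  define sig where "sig = sqrt (cDd * cAd / Am)"
  have mu: "mu > 0" "mu^2 = cA * cD / am" unfolding mu_def using hA hD amp by auto
  have nu: "nu > 0" "nu^2 = sA * sD / am" unfolding nu_def using hA hD amp by auto
  have rho: "rho > 0" "rho^2 = sDd * sAd / Am" unfolding rho_def using hAd hDd Amp by auto
  have sig: "sig > 0" "sig^2 = cDd * cAd / Am" unfolding sig_def using hAd hDd Amp by auto
  have mn1: "mu^2 + nu^2 = 1" unfolding mu nu using amp by (simp add: amv add_divide_distrib[symmetric])
  have mn2: "mu^2 - nu^2 = ap / am" unfolding mu nu using amp by (simp add: apv diff_divide_distrib[symmetric])
  have rs1: "rho^2 + sig^2 = 1" unfolding rho sig using Amp by (simp add: Amv add_divide_distrib[symmetric] mult.commute)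
  have rs2: "rho^2 - sig^2 = - (Ap / Am)" unfolding rho sig using Amp
    by (simp add: Apv diff_divide_distrib[symmetric] mult.commute minus_divide_left)
  have key1: "rho * mu * cDd * sA = sig * nu * sDd * cA"
  proof (rule power2_eq_imp_eq)
    have "(rho * mu * cDd * sA)^2 = rho^2 * mu^2 * cDd^2 * sA^2" by (simp add: power_mult_distrib)
    also have "\<dots> = (sDd * cDd * sA * cA / (Am * am)) * (sAd * cDd * sA * cD)"
      unfolding rho mu by (simp add: power2_eq_square field_simps)
    also have "\<dots> = (sDd * cDd * sA * cA / (Am * am)) * (cAd * sDd * cA * sD)" using E by simp
    also have "\<dots> = sig^2 * nu^2 * sDd^2 * cA^2"
      unfolding sig nu by (simp add: power2_eq_square field_simps)
    also have "\<dots> = (sig * nu * sDd * cA)^2" by (simp add: power_mult_distrib)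
    finally show "(rho * mu * cDd * sA)^2 = (sig * nu * sDd * cA)^2" .
    show "0 \<le> rho * mu * cDd * sA" using rho mu hA hDd by simp
    show "0 \<le> sig * nu * sDd * cA" using sig nu hA hDd by simp
  qed
  have key2: "rho * mu * cAd * sD = sig * nu * sAd * cD"
  proof (rule power2_eq_imp_eq)
    have "(rho * mu * cAd * sD)^2 = rho^2 * mu^2 * cAd^2 * sD^2" by (simp add: power_mult_distrib)
    also have "\<dots> = (sAd * cAd * cD * sD / (Am * am)) * (cAd * sDd * cA * sD)"
      unfolding rho mu by (simp add: power2_eq_square field_simps)
    also have "\<dots> = (sAd * cAd * cD * sD / (Am * am)) * (sAd * cDd * sA * cD)" using E by simp
    also have "\<dots> = sig^2 * nu^2 * sAd^2 * cD^2"
      unfolding sig nu by (simp add: power2_eq_square field_simps)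
    also have "\<dots> = (sig * nu * sAd * cD)^2" by (simp add: power_mult_distrib)
    finally show "(rho * mu * cAd * sD)^2 = (sig * nu * sAd * cD)^2" .
    show "0 \<le> rho * mu * cAd * sD" using rho mu hD hAd by simp
    show "0 \<le> sig * nu * sAd * cD" using sig nu hD hAd by simp
  qed
  define m1 where "m1 = mu / (2 * cA)"
  define n1 where "n1 = nu / (2 * sA)"
  define m2 where "m2 = mu / (2 * cD)"
  define n2 where "n2 = nu / (2 * sD)"
  define r1 where "r1 = rho / (2 * sDd)"
  define z1 where "z1 = sig / (2 * cDd)"
  define r2 where "r2 = rho / (2 * sAd)"
  define z2 where "z2 = sig / (2 * cAd)"
  have hm1: "m1^2 * (1 + x) = mu^2 / 2"
  proof - have h: "1 + x = 2 * cA^2" using hA by simp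
    show ?thesis unfolding m1_def h using hA(1) hA(2) by (simp add: power_divide power_mult_distrib field_simps) qed
  have hn1: "n1^2 * (1 - x) = nu^2 / 2"
  proof - have h: "1 - x = 2 * sA^2" using hA by simp
    show ?thesis unfolding n1_def h using hA(1) hA(2) by (simp add: power_divide power_mult_distrib field_simps) qed
  have hm2: "m2^2 * (1 + y) = mu^2 / 2"
  proof - have h: "1 + y = 2 * cD^2" using hD by simp
    show ?thesis unfolding m2_def h using hD(1) hD(2) by (simp add: power_divide power_mult_distrib field_simps) qed
  have hn2: "n2^2 * (1 - y) = nu^2 / 2"
  proof - have h: "1 - y = 2 * sD^2" using hD by simp
    show ?thesis unfolding n2_def h using hD(1) hD(2) by (simp add: power_divide power_mult_distrib field_simps) qed
  have hr1: "r1^2 * (1 + s) = rho^2 / 2"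
  proof - have h: "1 + s = 2 * sDd^2" using hDd by simp
    show ?thesis unfolding r1_def h using hDd(1) hDd(2) by (simp add: power_divide power_mult_distrib field_simps) qed
  have hz1: "z1^2 * (1 - s) = sig^2 / 2"
  proof - have h: "1 - s = 2 * cDd^2" using hDd by simp
    show ?thesis unfolding z1_def h using hDd(1) hDd(2) by (simp add: power_divide power_mult_distrib field_simps) qed
  have hr2: "r2^2 * (1 + t) = rho^2 / 2"
  proof - have h: "1 + t = 2 * sAd^2" using hAd by simp
    show ?thesis unfolding r2_def h using hAd(1) hAd(2) by (simp add: power_divide power_mult_distrib field_simps) qed
  have hz2: "z2^2 * (1 - t) = sig^2 / 2"
  proof - have h: "1 - t = 2 * cAd^2" using hAd by simp
    show ?thesis unfolding z2_def h using hAd(1) hAd(2) by (simp add: power_divide power_mult_distrib field_simps) qed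
  have hmm: "m1 * m2 = 1 / (4 * am)"
  proof - have "mu * mu = cA * cD / am" using mu by (simp add: power2_eq_square)
    then show ?thesis unfolding m1_def m2_def using hA hD amp by (simp add: field_simps) qed
  have hnn: "n1 * n2 = 1 / (4 * am)"
  proof - have "nu * nu = sA * sD / am" using nu by (simp add: power2_eq_square)
    then show ?thesis unfolding n1_def n2_def using hA hD amp by (simp add: field_simps) qed
  have hrr: "r1 * r2 = 1 / (4 * Am)"
  proof - have "rho * rho = sDd * sAd / Am" using rho by (simp add: power2_eq_square)
    then show ?thesis unfolding r1_def r2_def using hAd hDd Amp by (simp add: field_simps) qed
  have hzz: "z1 * z2 = 1 / (4 * Am)"
  proof - have "sig * sig = cDd * cAd / Am" using sig by (simp add: power2_eq_square)
    then show ?thesis unfolding z1_def z2_def using hAd hDd Amp by (simp add: field_simps) qed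
  have keyA: "r1 * m1 = z1 * n1"
    unfolding r1_def m1_def z1_def n1_def using key1 hA hDd by (simp add: field_simps)
  have keyB: "r2 * m2 = z2 * n2"
    unfolding r2_def m2_def z2_def n2_def using key2 hD hAd by (simp add: field_simps)
  have posA: "r1 * m1 + z1 * n1 > 0"
    unfolding r1_def m1_def z1_def n1_def using hA hDd mu nu rho sig by (simp add: add_pos_pos)
  have posB: "r2 * m2 + z2 * n2 > 0"
    unfolding r2_def m2_def z2_def n2_def using hD hAd mu nu rho sig by (simp add: add_pos_pos)
  define q :: "nat \<Rightarrow> real^4" where "q = (\<lambda>i. if i = 0 then (m1 + n1) *\<^sub>R p 0 + (m1 - n1) *\<^sub>R p 1
      else if i = 1 then (m1 - n1) *\<^sub>R p 0 + (m1 + n1) *\<^sub>R p 1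
      else if i = 2 then (m2 + n2) *\<^sub>R p 2 + (m2 - n2) *\<^sub>R p 3
      else (m2 - n2) *\<^sub>R p 2 + (m2 + n2) *\<^sub>R p 3)"
  define w :: "nat \<Rightarrow> real^4" where "w = (\<lambda>i. if i = 0 then (r1 + z1) *\<^sub>R v 0 + (r1 - z1) *\<^sub>R v 1
      else if i = 1 then (r1 - z1) *\<^sub>R v 0 + (r1 + z1) *\<^sub>R v 1
      else if i = 2 then (r2 + z2) *\<^sub>R v 2 + (r2 - z2) *\<^sub>R v 3
      else (r2 - z2) *\<^sub>R v 2 + (r2 + z2) *\<^sub>R v 3)"
  have q0: "q 0 = (m1 + n1) *\<^sub>R p 0 + (m1 - n1) *\<^sub>R p 1" unfolding q_def by simp
  have q1: "q 1 = (m1 - n1) *\<^sub>R p 0 + (m1 + n1) *\<^sub>R p 1" unfolding q_def by simp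
  have q2: "q 2 = (m2 + n2) *\<^sub>R p 2 + (m2 - n2) *\<^sub>R p 3" unfolding q_def by simp
  have q3: "q 3 = (m2 - n2) *\<^sub>R p 2 + (m2 + n2) *\<^sub>R p 3" unfolding q_def by simp
  have w0: "w 0 = (r1 + z1) *\<^sub>R v 0 + (r1 - z1) *\<^sub>R v 1" unfolding w_def by simp
  have w1: "w 1 = (r1 - z1) *\<^sub>R v 0 + (r1 + z1) *\<^sub>R v 1" unfolding w_def by simp
  have w2: "w 2 = (r2 + z2) *\<^sub>R v 2 + (r2 - z2) *\<^sub>R v 3" unfolding w_def by simp
  have w3: "w 3 = (r2 - z2) *\<^sub>R v 2 + (r2 + z2) *\<^sub>R v 3" unfolding w_def by simp
  note qw = q0 q1 q2 q3 w0 w1 w2 w3 q1[simplified] w1[simplified]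
  have qq00: "q 0 \<bullet> q 0 = 1"
  proof -
    have "q 0 \<bullet> q 0 = 2*(m1^2*(1+x)) + 2*(n1^2*(1-x))" by (simp add: qw ips tabs power2_eq_square algebra_simps)
    also have "\<dots> = 1" unfolding hm1 hn1 using mn1 by (simp add: field_simps)
    finally show ?thesis .
  qed
  have qq11: "q 1 \<bullet> q 1 = 1"
  proof -
    have "q 1 \<bullet> q 1 = 2*(m1^2*(1+x)) + 2*(n1^2*(1-x))" by (simp add: qw ips tabs power2_eq_square algebra_simps)
    also have "\<dots> = 1" unfolding hm1 hn1 using mn1 by (simp add: field_simps)
    finally show ?thesis .
  qed
  have qq22: "q 2 \<bullet> q 2 = 1"
  proof -
    have "q 2 \<bullet> q 2 = 2*(m2^2*(1+y)) + 2*(n2^2*(1-y))" by (simp add: qw ips tabs power2_eq_square algebra_simps)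
    also have "\<dots> = 1" unfolding hm2 hn2 using mn1 by (simp add: field_simps)
    finally show ?thesis .
  qed
  have qq33: "q 3 \<bullet> q 3 = 1"
  proof -
    have "q 3 \<bullet> q 3 = 2*(m2^2*(1+y)) + 2*(n2^2*(1-y))" by (simp add: qw ips tabs power2_eq_square algebra_simps)
    also have "\<dots> = 1" unfolding hm2 hn2 using mn1 by (simp add: field_simps)
    finally show ?thesis .
  qed
  have qq01: "q 0 \<bullet> q 1 = ap / am"
  proof -
    have "q 0 \<bullet> q 1 = 2*(m1^2*(1+x)) - 2*(n1^2*(1-x))" by (simp add: qw ips tabs power2_eq_square algebra_simps)
    also have "\<dots> = ap / am" unfolding hm1 hn1 using mn2 by (simp add: field_simps)
    finally show ?thesis .
  qed
  have qq23: "q 2 \<bullet> q 3 = ap / am"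
  proof -
    have "q 2 \<bullet> q 3 = 2*(m2^2*(1+y)) - 2*(n2^2*(1-y))" by (simp add: qw ips tabs power2_eq_square algebra_simps)
    also have "\<dots> = ap / am" unfolding hm2 hn2 using mn2 by (simp add: field_simps)
    finally show ?thesis .
  qed
  have qq02: "q 0 \<bullet> q 2 = bq / am"
  proof -
    have "q 0 \<bullet> q 2 = 2*(m1*m2+n1*n2)*bq + 2*(m1*m2-n1*n2)*cq" by (simp add: qw ips tabs power2_eq_square algebra_simps)
    also have "\<dots> = bq / am" unfolding hmm hnn using amp by (simp add: field_simps)
    finally show ?thesis .
  qed
  have qq13: "q 1 \<bullet> q 3 = bq / am"
  proof -
    have "q 1 \<bullet> q 3 = 2*(m1*m2+n1*n2)*bq + 2*(m1*m2-n1*n2)*cq" by (simp add: qw ips tabs power2_eq_square algebra_simps)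
    also have "\<dots> = bq / am" unfolding hmm hnn using amp by (simp add: field_simps)
    finally show ?thesis .
  qed
  have qq03: "q 0 \<bullet> q 3 = cq / am"
  proof -
    have "q 0 \<bullet> q 3 = 2*(m1*m2-n1*n2)*bq + 2*(m1*m2+n1*n2)*cq" by (simp add: qw ips tabs power2_eq_square algebra_simps)
    also have "\<dots> = cq / am" unfolding hmm hnn using amp by (simp add: field_simps)
    finally show ?thesis .
  qed
  have qq12: "q 1 \<bullet> q 2 = cq / am"
  proof -
    have "q 1 \<bullet> q 2 = 2*(m1*m2-n1*n2)*bq + 2*(m1*m2+n1*n2)*cq" by (simp add: qw ips tabs power2_eq_square algebra_simps)
    also have "\<dots> = cq / am" unfolding hmm hnn using amp by (simp add: field_simps)
    finally show ?thesis .
  qed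
  have ww00: "w 0 \<bullet> w 0 = 1"
  proof -
    have "w 0 \<bullet> w 0 = 2*(r1^2*(1+s)) + 2*(z1^2*(1-s))" by (simp add: qw ips tabs power2_eq_square algebra_simps)
    also have "\<dots> = 1" unfolding hr1 hz1 using rs1 by (simp add: field_simps)
    finally show ?thesis .
  qed
  have ww11: "w 1 \<bullet> w 1 = 1"
  proof -
    have "w 1 \<bullet> w 1 = 2*(r1^2*(1+s)) + 2*(z1^2*(1-s))" by (simp add: qw ips tabs power2_eq_square algebra_simps)
    also have "\<dots> = 1" unfolding hr1 hz1 using rs1 by (simp add: field_simps)
    finally show ?thesis .
  qed
  have ww22: "w 2 \<bullet> w 2 = 1"
  proof -
    have "w 2 \<bullet> w 2 = 2*(r2^2*(1+t)) + 2*(z2^2*(1-t))" by (simp add: qw ips tabs power2_eq_square algebra_simps)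
    also have "\<dots> = 1" unfolding hr2 hz2 using rs1 by (simp add: field_simps)
    finally show ?thesis .
  qed
  have ww33: "w 3 \<bullet> w 3 = 1"
  proof -
    have "w 3 \<bullet> w 3 = 2*(r2^2*(1+t)) + 2*(z2^2*(1-t))" by (simp add: qw ips tabs power2_eq_square algebra_simps)
    also have "\<dots> = 1" unfolding hr2 hz2 using rs1 by (simp add: field_simps)
    finally show ?thesis .
  qed
  have ww01: "w 0 \<bullet> w 1 = - (Ap / Am)"
  proof -
    have "w 0 \<bullet> w 1 = 2*(r1^2*(1+s)) - 2*(z1^2*(1-s))" by (simp add: qw ips tabs power2_eq_square algebra_simps)
    also have "\<dots> = - (Ap / Am)" unfolding hr1 hz1 using rs2 by (simp add: field_simps)
    finally show ?thesis .
  qed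
  have ww23: "w 2 \<bullet> w 3 = - (Ap / Am)"
  proof -
    have "w 2 \<bullet> w 3 = 2*(r2^2*(1+t)) - 2*(z2^2*(1-t))" by (simp add: qw ips tabs power2_eq_square algebra_simps)
    also have "\<dots> = - (Ap / Am)" unfolding hr2 hz2 using rs2 by (simp add: field_simps)
    finally show ?thesis .
  qed
  have ww02: "w 0 \<bullet> w 2 = bb / Am"
  proof -
    have "w 0 \<bullet> w 2 = 2*(r1*r2+z1*z2)*bb + 2*(r1*r2-z1*z2)*cc" by (simp add: qw ips tabs power2_eq_square algebra_simps)
    also have "\<dots> = bb / Am" unfolding hrr hzz using Amp by (simp add: field_simps)
    finally show ?thesis .
  qed
  have ww13: "w 1 \<bullet> w 3 = bb / Am"
  proof -
    have "w 1 \<bullet> w 3 = 2*(r1*r2+z1*z2)*bb + 2*(r1*r2-z1*z2)*cc" by (simp add: qw ips tabs power2_eq_square algebra_simps)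
    also have "\<dots> = bb / Am" unfolding hrr hzz using Amp by (simp add: field_simps)
    finally show ?thesis .
  qed
  have ww03: "w 0 \<bullet> w 3 = cc / Am"
  proof -
    have "w 0 \<bullet> w 3 = 2*(r1*r2-z1*z2)*bb + 2*(r1*r2+z1*z2)*cc" by (simp add: qw ips tabs power2_eq_square algebra_simps)
    also have "\<dots> = cc / Am" unfolding hrr hzz using Amp by (simp add: field_simps)
    finally show ?thesis .
  qed
  have ww12: "w 1 \<bullet> w 2 = cc / Am"
  proof -
    have "w 1 \<bullet> w 2 = 2*(r1*r2-z1*z2)*bb + 2*(r1*r2+z1*z2)*cc" by (simp add: qw ips tabs power2_eq_square algebra_simps)
    also have "\<dots> = cc / Am" unfolding hrr hzz using Amp by (simp add: field_simps)
    finally show ?thesis .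
  qed
  have wq00: "w 0 \<bullet> q 0 = - 2 * k0 * (r1*m1 + z1*n1)" by (simp add: qw ips tabs power2_eq_square algebra_simps)
  have wq01: "w 0 \<bullet> q 1 = 0"
  proof -
    have "w 0 \<bullet> q 1 = - 2 * k0 * (r1*m1 - z1*n1)" by (simp add: qw ips tabs power2_eq_square algebra_simps)
    also have "\<dots> = 0" unfolding keyA by (simp add: field_simps)
    finally show ?thesis .
  qed
  have wq02: "w 0 \<bullet> q 2 = 0" by (simp add: qw ips tabs)
  have wq03: "w 0 \<bullet> q 3 = 0" by (simp add: qw ips tabs)
  have wq10: "w 1 \<bullet> q 0 = 0"
  proof -
    have "w 1 \<bullet> q 0 = - 2 * k0 * (r1*m1 - z1*n1)" by (simp add: qw ips tabs power2_eq_square algebra_simps)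
    also have "\<dots> = 0" unfolding keyA by (simp add: field_simps)
    finally show ?thesis .
  qed
  have wq11: "w 1 \<bullet> q 1 = - 2 * k0 * (r1*m1 + z1*n1)" by (simp add: qw ips tabs power2_eq_square algebra_simps)
  have wq12: "w 1 \<bullet> q 2 = 0" by (simp add: qw ips tabs)
  have wq13: "w 1 \<bullet> q 3 = 0" by (simp add: qw ips tabs)
  have wq20: "w 2 \<bullet> q 0 = 0" by (simp add: qw ips tabs)
  have wq21: "w 2 \<bullet> q 1 = 0" by (simp add: qw ips tabs)
  have wq22: "w 2 \<bullet> q 2 = - 2 * k2 * (r2*m2 + z2*n2)" by (simp add: qw ips tabs power2_eq_square algebra_simps)
  have wq23: "w 2 \<bullet> q 3 = 0"
  proof -
    have "w 2 \<bullet> q 3 = - 2 * k2 * (r2*m2 - z2*n2)" by (simp add: qw ips tabs power2_eq_square algebra_simps)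
    also have "\<dots> = 0" unfolding keyB by (simp add: field_simps)
    finally show ?thesis .
  qed
  have wq30: "w 3 \<bullet> q 0 = 0" by (simp add: qw ips tabs)
  have wq31: "w 3 \<bullet> q 1 = 0" by (simp add: qw ips tabs)
  have wq32: "w 3 \<bullet> q 2 = 0"
  proof -
    have "w 3 \<bullet> q 2 = - 2 * k2 * (r2*m2 - z2*n2)" by (simp add: qw ips tabs power2_eq_square algebra_simps)
    also have "\<dots> = 0" unfolding keyB by (simp add: field_simps)
    finally show ?thesis .
  qed
  have wq33: "w 3 \<bullet> q 3 = - 2 * k2 * (r2*m2 + z2*n2)" by (simp add: qw ips tabs power2_eq_square algebra_simps)
  note qqt = qq00 qq11 qq22 qq33 qq01 qq23 qq02 qq13 qq03 qq12
  note wwt = ww00 ww11 ww22 ww33 ww01 ww23 ww02 ww13 ww03 ww12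
  note wqt = wq00 wq01 wq02 wq03 wq10 wq11 wq12 wq13 wq20 wq21 wq22 wq23 wq30 wq31 wq32 wq33
  have qq10: "q 1 \<bullet> q 0 = q 0 \<bullet> q 1" by (rule inner_commute)
  have qq32: "q 3 \<bullet> q 2 = q 2 \<bullet> q 3" by (rule inner_commute)
  have qq20: "q 2 \<bullet> q 0 = q 0 \<bullet> q 2" by (rule inner_commute)
  have qq31: "q 3 \<bullet> q 1 = q 1 \<bullet> q 3" by (rule inner_commute)
  have qq30: "q 3 \<bullet> q 0 = q 0 \<bullet> q 3" by (rule inner_commute)
  have qq21: "q 2 \<bullet> q 1 = q 1 \<bullet> q 2" by (rule inner_commute)
  have ww10: "w 1 \<bullet> w 0 = w 0 \<bullet> w 1" by (rule inner_commute)
  have ww32: "w 3 \<bullet> w 2 = w 2 \<bullet> w 3" by (rule inner_commute)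
  have ww20: "w 2 \<bullet> w 0 = w 0 \<bullet> w 2" by (rule inner_commute)
  have ww31: "w 3 \<bullet> w 1 = w 1 \<bullet> w 3" by (rule inner_commute)
  have ww30: "w 3 \<bullet> w 0 = w 0 \<bullet> w 3" by (rule inner_commute)
  have ww21: "w 2 \<bullet> w 1 = w 1 \<bullet> w 2" by (rule inner_commute)
  have cases4: "\<And>i::nat. i < 4 \<Longrightarrow> i = 0 \<or> i = 1 \<or> i = 2 \<or> i = 3" by auto
  have qn: "\<And>i. i < 4 \<Longrightarrow> norm (q i) = 1"
  proof -
    fix i :: nat assume "i < 4"
    then have "q i \<bullet> q i = 1" using cases4 qq00 qq11 qq22 qq33 by auto
    then show "norm (q i) = 1" by (simp add: norm_eq_sqrt_inner)
  qed
  have wn: "\<And>i. i < 4 \<Longrightarrow> norm (w i) = 1"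
  proof -
    fix i :: nat assume "i < 4"
    then have "w i \<bullet> w i = 1" using cases4 ww00 ww11 ww22 ww33 by auto
    then show "norm (w i) = 1" by (simp add: norm_eq_sqrt_inner)
  qed
  have wqo: "\<And>i j. i < 4 \<Longrightarrow> j < 4 \<Longrightarrow> j \<noteq> i \<Longrightarrow> w i \<bullet> q j = 0"
  proof -
    fix i j :: nat assume "i < 4" "j < 4" "j \<noteq> i"
    then show "w i \<bullet> q j = 0" using cases4[of i] cases4[of j] wqt by auto
  qed
  have nA: "- 2 * k0 * (r1*m1 + z1*n1) < 0"
  proof - have "k0 * (r1*m1 + z1*n1) > 0" using k0 posA by (rule mult_pos_pos)
    then show ?thesis by linarith qed
  have nB: "- 2 * k2 * (r2*m2 + z2*n2) < 0"
  proof - have "k2 * (r2*m2 + z2*n2) > 0" using k2 posB by (rule mult_pos_pos)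
    then show ?thesis by linarith qed
  have wqn: "\<And>i. i < 4 \<Longrightarrow> w i \<bullet> q i < 0"
  proof -
    fix i :: nat assume "i < 4"
    then show "w i \<bullet> q i < 0" using cases4[of i] wq00 wq11 wq22 wq33 nA nB by auto
  qed
  have Tq: "spherical_tetrahedron q"
    by (rule tet_by_duals[of q w]) (use qn wqo wqn in \<open>auto simp: less_imp_neq\<close>)
  have onq: "\<And>i. i < 4 \<Longrightarrow> outer_normal q i = w i"
    using normal_unique[OF Tq] wn wqo wqn by blast
  have Qt: "\<And>i j. i < 4 \<Longrightarrow> j < 4 \<Longrightarrow> q i \<bullet> q j = sym_pattern 1 (ap/am) (bq/am) (cq/am) i j"
  proof -
    fix i j :: nat assume "i < 4" "j < 4"
    then show "q i \<bullet> q j = sym_pattern 1 (ap/am) (bq/am) (cq/am) i j"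
      using cases4[of i] cases4[of j] qqt qq10 qq32 qq20 qq31 qq30 qq21
      by (auto simp: sym_pattern_def doubleton_eq_iff)
  qed
  have Wt: "\<And>i j. i < 4 \<Longrightarrow> j < 4 \<Longrightarrow> w i \<bullet> w j = sym_pattern 1 (- (Ap/Am)) (bb/Am) (cc/Am) i j"
  proof -
    fix i j :: nat assume "i < 4" "j < 4"
    then show "w i \<bullet> w j = sym_pattern 1 (- (Ap/Am)) (bb/Am) (cc/Am) i j"
      using cases4[of i] cases4[of j] wwt ww10 ww32 ww20 ww31 ww30 ww21
      by (auto simp: sym_pattern_def doubleton_eq_iff)
  qed
  have wcs: "\<And>i j. i < 4 \<Longrightarrow> j < 4 \<Longrightarrow> \<bar>w i \<bullet> w j\<bar> \<le> 1"
    using Cauchy_Schwarz_ineq2 wn by (metis mult_1)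
  have qcs: "\<And>i j. i < 4 \<Longrightarrow> j < 4 \<Longrightarrow> \<bar>q i \<bullet> q j\<bar> \<le> 1"
    using Cauchy_Schwarz_ineq2 qn by (metis mult_1)
  have b1: "\<bar>Ap/Am\<bar> \<le> 1" using wcs[of 0 1] ww01 by simp
  have b2: "\<bar>bb/Am\<bar> \<le> 1" using wcs[of 0 2] ww02 by simp
  have b3: "\<bar>cc/Am\<bar> \<le> 1" using wcs[of 0 3] ww03 by simp
  have b4: "\<bar>ap/am\<bar> \<le> 1" using qcs[of 0 1] qq01 by simp
  have b5: "\<bar>bq/am\<bar> \<le> 1" using qcs[of 0 2] qq02 by simp
  have b6: "\<bar>cq/am\<bar> \<le> 1" using qcs[of 0 3] qq03 by simp
  have c1: "cos (arccos (Ap/Am)) = Ap/Am" using b1 unfolding abs_le_iff by (intro cos_arccos) linarith+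
  have c2: "cos (arccos (- (bb/Am))) = - (bb/Am)" using b2 unfolding abs_le_iff by (intro cos_arccos) linarith+
  have c3: "cos (arccos (- (cc/Am))) = - (cc/Am)" using b3 unfolding abs_le_iff by (intro cos_arccos) linarith+
  have c4: "cos (arccos (ap/am)) = ap/am" using b4 unfolding abs_le_iff by (intro cos_arccos) linarith+
  have c5: "cos (arccos (bq/am)) = bq/am" using b5 unfolding abs_le_iff by (intro cos_arccos) linarith+
  have c6: "cos (arccos (cq/am)) = cq/am" using b6 unfolding abs_le_iff by (intro cos_arccos) linarith+
  have dq: "\<And>i j. i < 4 \<Longrightarrow> j < 4 \<Longrightarrow> dih q i j = arccos (- sym_pattern 1 (- (Ap/Am)) (bb/Am) (cc/Am) i j)"
    using Wt onq by (simp add: dih_def)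
  have elq: "\<And>i j. i < 4 \<Longrightarrow> j < 4 \<Longrightarrow> edge_len q i j = arccos (sym_pattern 1 (ap/am) (bq/am) (cq/am) i j)"
    using Qt by (simp add: edge_len_def)
  have gq: "\<And>i j. i < 4 \<Longrightarrow> j < 4 \<Longrightarrow> gram_matrix q i j = sym_pattern 1 (- (Ap/Am)) (bb/Am) (cc/Am) i j"
    using Wt onq by (simp add: gram_matrix_def)
  have emq: "\<And>i j. i < 4 \<Longrightarrow> j < 4 \<Longrightarrow> edge_matrix q i j = sym_pattern 1 (ap/am) (bq/am) (cq/am) i j"
    using Qt by (simp add: edge_matrix_def)
  have sp: "sym_pattern d xa ya za 0 1 = xa" "sym_pattern d xa ya za 2 3 = xa"
    "sym_pattern d xa ya za 0 2 = ya" "sym_pattern d xa ya za 1 3 = ya"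
    "sym_pattern d xa ya za 0 3 = za" "sym_pattern d xa ya za 1 2 = za" for d xa ya za :: real
    by (simp_all add: sym_pattern_def doubleton_eq_iff)
  have c2': "cos (arccos (- bb / Am)) = - bb / Am" using c2 by simp
  have c3': "cos (arccos (- cc / Am)) = - cc / Am" using c3 by simp
  show ?thesis
    apply (rule exI[where x = q], rule conjI[OF Tq])
    apply (rule exI[where x = "arccos (Ap/Am)"], rule exI[where x = "arccos (- (bb/Am))"],
        rule exI[where x = "arccos (- (cc/Am))"], rule exI[where x = "arccos (ap/am)"],
        rule exI[where x = "arccos (bq/am)"], rule exI[where x = "arccos (cq/am)"])
    apply (intro conjI allI impI)
    apply (simp_all add: dq elq gq emq sp sp[simplified] c1 c2 c3 c4 c5 c6 c2' c3' Bcval Ccval bval cval)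
    done
qed
end
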